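(* Let $\eta>0$ and let $I=[u,u+\eta]$ and $J=[v,v+\eta]$ be two intervals contained in $[0,1]$. Then for all sufficiently large $n$ there exists an integer $a$ such that $$\frac{a}{F_n}\in I,\qquad \left\{\frac{F_{n-1}a}{F_n}\right\}\in J,\qquad 1\leqslant a<F_n,\qquad \gcd(a,F_n)=1.$$
   Context: $F_n$ denotes the $n$-th Fibonacci number ($F_1=F_2=1$, $F_{n+1}=F_n+F_{n-1}$). For a real number $t$, $\{t\}$ denotes its fractional part. *)

theory Defs
  imports "HOL-Analysis.Analysis" "HOL-Number_Theory.Fib"
begin

end

theory Submission
  imports Defs
begin


lemma fib_id_aux:
  "int (fib (k+j)) * int (fib (k+1)) + (-1)^(k+1) * int (fib j) = int (fib (k+j+1)) * int (fib k)
 \<and> int (fib (k+Suc j)) * int (fib (k+1)) + (-1)^(k+1) * int (fib (Suc j)) = int (fib (k+Suc j+1)) * int (fib k)"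
proof (induction j)
  case 0
  have "int (fib (Suc (Suc k)) * fib k) - int((fib (Suc k))\<^sup>2) = - ((-1)^k)"
    by (rule fib_Cassini_int)
  then show ?case by (simp add: power2_eq_square algebra_simps)
next
  case (Suc j)
  have e1: "fib (k + Suc (Suc j)) = fib (k + Suc j) + fib (k+j)"
    by (metis add_Suc_right fib.simps(3))
  have e2: "fib (k + Suc (Suc j) + 1) = fib (k + Suc j + 1) + fib (k+j+1)"
    by (metis add_Suc_right add_Suc fib.simps(3) Suc_eq_plus1)
  have e3: "fib (Suc (Suc j)) = fib (Suc j) + fib j" by simp
  show ?case using Suc e1 e2 e3 by (simp add: algebra_simps)
qed

lemma fib_id:
  "int (fib (k+j)) * int (fib (k+1)) + (-1)^(k+1) * int (fib j) = int (fib (k+j+1)) * int (fib k)"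
  using fib_id_aux by blast



lemma count_base:
  fixes c T :: real assumes "T \<ge> 0"
  shows "\<bar>real (card {m::int. c \<le> m \<and> m < c + T}) - T\<bar> \<le> 1"
proof -
  have eq: "{m::int. c \<le> m \<and> m < c + T} = {\<lceil>c\<rceil>..<\<lceil>c+T\<rceil>}"
    by (auto simp: ceiling_le_iff less_ceiling_iff)
  have "\<lceil>c\<rceil> \<le> \<lceil>c+T\<rceil>" using assms by (intro ceiling_mono) simp
  then have "real (card {m::int. c \<le> m \<and> m < c + T}) = of_int \<lceil>c+T\<rceil> - of_int \<lceil>c\<rceil>"
    unfolding eq by simp
  moreover have "c \<le> of_int \<lceil>c\<rceil>" "of_int \<lceil>c\<rceil> < c + 1" "c + T \<le> of_int \<lceil>c+T\<rceil>" "of_int \<lceil>c+T\<rceil> < c + T + 1"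
    by linarith+
  ultimately show ?thesis by linarith
qed

lemma sieve:
  assumes "finite S" "\<forall>p\<in>S. prime (p::int)"
  shows "\<forall>(c::real) (T::real). T \<ge> 0 \<longrightarrow> \<bar>real (card {m::int. c \<le> m \<and> m < c + T \<and> (\<forall>p\<in>S. \<not> p dvd (m::int))})
            - T * (\<Prod>p\<in>S. 1 - 1 / real_of_int p)\<bar> \<le> 2 ^ card S"
  using assms
proof (induction S rule: finite_induct)
  case empty
  then show ?case using count_base by simp
next
  case (insert p S)
  show ?case
  proof (intro allI impI)
    fix c T :: real assume T: "T \<ge> 0"
    have pp: "prime p" using insert by auto
    have p0: "p > 0" using pp prime_gt_0_int by blast
    have Sp: "\<forall>q\<in>S. prime q" using insert by auto
    define A where "A = {m::int. c \<le> m \<and> m < c + T \<and> (\<forall>q\<in>S. \<not> q dvd (m::int))}"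
    define A' where "A' = {m::int. c \<le> m \<and> m < c + T \<and> (\<forall>q\<in>insert p S. \<not> q dvd (m::int))}"
    define D where "D = {m\<in>A. p dvd (m::int)}"
    define E where "E = {m::int. c/p \<le> m \<and> m < c/p + T/p \<and> (\<forall>q\<in>S. \<not> q dvd (m::int))}"
    have finA: "finite A"
    proof (rule finite_subset)
      show "A \<subseteq> {\<lfloor>c\<rfloor>..\<lceil>c+T\<rceil>}" unfolding A_def by (auto simp: floor_le_iff le_ceiling_iff) 
    qed simp
    have A'eq: "A' = A - D" unfolding A'_def A_def D_def by auto
    have "D \<subseteq> A" unfolding D_def by auto
    then have cA: "card A' = card A - card D" "card D \<le> card A"
      using finA A'eq by (auto simp: card_Diff_subset finite_subset card_mono)
    have Deq: "D = (\<lambda>m. p * m) ` E"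
    proof safe
      fix m assume m: "m \<in> D"
      then obtain m' where mm: "m = p * m'" unfolding D_def by auto
      have "m' \<in> E"
      proof -
        have "c \<le> p * m'" "p * m' < c + T" using m mm unfolding D_def A_def by auto
        then have "c / p \<le> m'" "m' < c/p + T/p" using p0
          by (auto simp: field_simps)
        moreover have "\<forall>q\<in>S. \<not> q dvd m'" using m mm unfolding D_def A_def by auto
        ultimately show ?thesis unfolding E_def by auto
      qed
      then show "m \<in> (\<lambda>m. p * m) ` E" using mm by auto
    next
      fix m' assume m': "m' \<in> E"
      have "c \<le> p * m'" "p * m' < c + T" using m' p0 unfolding E_def
        by (auto simp: field_simps)
      moreover have "\<not> q dvd p * m'" if q: "q \<in> S" for q
      proof
        assume "q dvd p * m'"
        moreover have "prime q" using Sp q by auto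
        ultimately have "q dvd p \<or> q dvd m'" using prime_dvd_mult_iff by blast
        moreover have "\<not> q dvd m'" using m' q unfolding E_def by auto
        moreover have "q \<noteq> p" using q insert by auto
        ultimately show False using primes_dvd_imp_eq[OF \<open>prime q\<close> pp] by auto
      qed
      ultimately show "p * m' \<in> D" unfolding D_def A_def by auto
    qed
    have "inj_on (\<lambda>m. p * m) E" using p0 by (auto simp: inj_on_def)
    then have cD: "card D = card E" using Deq card_image by blast
    have IH: "\<forall>(c::real) (T::real). T \<ge> 0 \<longrightarrow> \<bar>real (card {m::int. c \<le> m \<and> m < c + T \<and> (\<forall>p\<in>S. \<not> p dvd (m::int))})
            - T * (\<Prod>p\<in>S. 1 - 1 / real_of_int p)\<bar> \<le> 2 ^ card S" using insert Sp by blast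
    define P where "P = (\<Prod>p\<in>S. 1 - 1 / real_of_int p)"
    have h1: "\<bar>real (card A) - T * P\<bar> \<le> 2 ^ card S" using IH T unfolding A_def P_def by blast
    have "T/p \<ge> 0" using T p0 by simp
    then have h2: "\<bar>real (card E) - (T/p) * P\<bar> \<le> 2 ^ card S" using IH unfolding E_def P_def
      by blast
    have prod: "(\<Prod>q\<in>insert p S. 1 - 1 / real_of_int q) = (1 - 1/p) * P"
      using insert unfolding P_def by simp
    have "real (card A') = real (card A) - real (card E)" using cA cD by simp
    moreover have "T * ((1 - 1/p) * P) = T * P - (T/p) * P" by (simp add: algebra_simps)
    ultimately show "\<bar>real (card {m::int. c \<le> m \<and> m < c + T \<and> (\<forall>p\<in>insert p S. \<not> p dvd (m::int))})
            - T * (\<Prod>p\<in>insert p S. 1 - 1 / real_of_int p)\<bar> \<le> 2 ^ card (insert p S)"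
      using h1 h2 insert(1,2) unfolding A'_def[symmetric] prod by simp
  qed
qed



lemma primes_prod_dvd:
  assumes "finite S" "\<forall>p\<in>S. prime (p::int) \<and> p dvd N"
  shows "(\<Prod>p\<in>S. p) dvd N"
  using assms
proof (induction S rule: finite_induct)
  case empty then show ?case by simp
next
  case (insert p S)
  have "prime p" "p dvd N" using insert by auto
  have "(\<Prod>q\<in>S. q) dvd N" using insert by auto
  moreover have "coprime p (\<Prod>q\<in>S. q)"
  proof (rule prime_imp_coprime[OF \<open>prime p\<close>])
    show "\<not> p dvd (\<Prod>q\<in>S. q)"
    proof
      assume "p dvd (\<Prod>q\<in>S. q)"
      then obtain q where "q \<in> S" "p dvd q" using prime_dvd_prod_iff[OF insert(1) \<open>prime p\<close>] by auto
      then have "p = q" using primes_dvd_imp_eq[OF \<open>prime p\<close>] insert by auto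
      then show False using insert \<open>q \<in> S\<close> by auto
    qed
  qed
  ultimately have "p * (\<Prod>q\<in>S. q) dvd N" using \<open>p dvd N\<close> by (intro divides_mult) auto
  then show ?case using insert by simp
qed

lemma count64:
  fixes N :: int
  assumes "N > 0"
  shows "(64::real) ^ card {p::int. prime p \<and> p dvd N} \<le> 64^64 * real_of_int N"
proof -
  define S where "S = {p::int. prime p \<and> p dvd N}"
  have finS: "finite S"
  proof (rule finite_subset[of _ "{0..N}"])
    show "S \<subseteq> {0..N}"
    proof
      fix p assume "p \<in> S"
      then have "prime p" "p dvd N" by (auto simp: S_def)
      then show "p \<in> {0..N}" using assms zdvd_imp_le[of p N] prime_ge_0_int[of p] by simp
    qed
  qed simp
  define S1 where "S1 = {p\<in>S. p < 64}"
  define S2 where "S2 = {p\<in>S. p \<ge> 64}"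
  have fin1: "finite S1" using finS unfolding S1_def by simp
  have fin2: "finite S2" using finS unfolding S2_def by simp
  have SU: "S = S1 \<union> S2" unfolding S1_def S2_def by auto
  have SI: "S1 \<inter> S2 = {}" unfolding S1_def S2_def by auto
  have cs: "card S = card S1 + card S2" unfolding SU by (rule card_Un_disjoint[OF fin1 fin2 SI])
  have "S1 \<subseteq> {0..<64}" unfolding S1_def S_def using prime_ge_0_int by auto
  then have "card S1 \<le> card {0..<(64::int)}" by (rule card_mono[rotated]) simp
  then have c1: "card S1 \<le> 64" by simp
  have "(64::real) ^ card S2 = (\<Prod>p\<in>S2. 64)" by (rule prod_constant[symmetric])
  also have "\<dots> \<le> (\<Prod>p\<in>S2. real_of_int p)"
  proof (rule prod_mono)
    fix p assume "p \<in> S2"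
    then have "p \<ge> 64" unfolding S2_def by simp
    then show "0 \<le> (64::real) \<and> 64 \<le> real_of_int p" by simp
  qed
  also have "\<dots> = real_of_int (\<Prod>p\<in>S2. p)" by (rule of_int_prod[symmetric])
  also have "\<dots> \<le> real_of_int N"
  proof -
    have "(\<Prod>p\<in>S2. p) dvd N" by (rule primes_prod_dvd[OF fin2]) (auto simp: S2_def S_def)
    then have "(\<Prod>p\<in>S2. p) \<le> N" using assms by (rule zdvd_imp_le)
    then show ?thesis by (simp only: of_int_le_iff)
  qed
  finally have h2: "(64::real) ^ card S2 \<le> N" .
  have p1: "(64::real) ^ card S1 \<le> 64 ^ 64" by (rule power_increasing[OF c1]) simp
  have "(64::real) ^ card S = 64 ^ card S1 * 64 ^ card S2" by (simp only: cs power_add)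
  also have "\<dots> \<le> 64^64 * real_of_int N" by (rule mult_mono[OF p1 h2]) simp_all
  finally show ?thesis unfolding S_def .
qed

lemma coprime_from_S:
  fixes N m :: int assumes "N \<noteq> 0" "\<forall>p\<in>{p. prime p \<and> p dvd N}. \<not> p dvd m"
  shows "coprime m N"
proof (rule ccontr)
  assume "\<not> coprime m N"
  then have "\<not> is_unit (gcd m N)" by (simp add: coprime_iff_gcd_eq_1)
  moreover have "gcd m N \<noteq> 0" using assms by simp
  ultimately obtain p where "prime p" "p dvd gcd m N" using prime_divisorE by blast
  then show False using assms by auto
qed


lemma core:
  fixes \<eta> u v M K :: real and k j :: nat
  assumes eta: "\<eta> > 0" and u: "0 \<le> u" "u + \<eta> \<le> 1" and v: "0 \<le> v" "v + \<eta> \<le> 1"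
    and cop: "coprime (int (fib (Suc k))) (int (fib (Suc k + j + 1)))"
    and M1: "real (fib (Suc k + 2)) \<le> M" and M2: "real (fib (j+2)) \<le> M"
    and M3: "M^2 \<le> 9 * real (fib (Suc k + j + 1))"
    and Kb: "(64::real)^64 \<le> K"
    and big: "real (fib (Suc k + j + 1)) > 144/\<eta>^2 + 144^3 * K^2 / \<eta>^6"
  shows "\<exists>a::int. real_of_int a / real (fib (Suc k+j+1)) \<in> {u..u+\<eta>} \<and>
     frac (real (fib (Suc k + j)) * real_of_int a / real (fib (Suc k+j+1))) \<in> {v..v+\<eta>} \<and>
     1 \<le> a \<and> a < int (fib (Suc k+j+1)) \<and> coprime a (int (fib (Suc k+j+1)))"
proof -
  define Fk where "Fk = int (fib (Suc k))"
  define Fk1 where "Fk1 = int (fib (Suc k + 1))"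
  define Fkm where "Fkm = int (fib k)"
  define Fj where "Fj = int (fib j)"
  define Fj1 where "Fj1 = int (fib (j+1))"
  define Ni where "Ni = int (fib (Suc k + j + 1))"
  define Ci where "Ci = int (fib (Suc k + j))"
  define N where "N = real (fib (Suc k + j + 1))"
  have NN: "N = real_of_int Ni" unfolding N_def Ni_def by simp
  have id1: "Ci * Fk1 + (-1)^(Suc k+1) * Fj = Ni * Fk"
    unfolding Ci_def Fk1_def Fj_def Ni_def Fk_def by (rule fib_id)
  have id2: "Ci * Fk + (-1)^(Suc k) * Fj1 = Ni * Fkm"
    using fib_id[of k "j+1"] unfolding Ci_def Fk_def Fj1_def Ni_def Fkm_def by (simp add: add_ac)
  have idN: "Ni = Fj1 * Fk1 + Fj * Fk"
    using fib_add[of "Suc k" j] unfolding Ni_def Fj1_def Fk1_def Fj_def Fk_def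
    by (simp add: add_ac)
  define s :: int where "s = (-1)^(Suc k+1)"
  have ss: "s * s = 1" unfolding s_def by (simp add: power_add[symmetric] power_even_eq[symmetric]) 
  define sr where "sr = real_of_int s"
  have ssr: "sr * sr = 1" unfolding sr_def using ss by (metis of_int_1 of_int_mult)
  define \<alpha> where "\<alpha> = u + \<eta>/2"
  define \<beta> where "\<beta> = v + \<eta>/2"
  define fk where "fk = real_of_int Fk"
  define fk1 where "fk1 = real_of_int Fk1"
  define fj where "fj = real_of_int Fj"
  define fj1 where "fj1 = real_of_int Fj1"
  have idNr: "N = fj1 * fk1 + fj * fk" unfolding NN fj1_def fk1_def fj_def fk_def idN by simp
  define X where "X = \<alpha> * fj + sr * \<beta> * fk1"
  define Y where "Y = \<alpha> * fj1 - sr * \<beta> * fk"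
  have XY1: "X * fk + Y * fk1 = \<alpha> * N" unfolding X_def Y_def idNr by (simp add: algebra_simps)
  have XY2: "X * fj1 - Y * fj = sr * \<beta> * N" unfolding X_def Y_def idNr by (simp add: algebra_simps)
  define x0 where "x0 = \<lfloor>X\<rfloor>"
  define y0 where "y0 = \<lfloor>Y\<rfloor>"
  have gcd1: "gcd Fk Ni = 1" using cop unfolding Fk_def Ni_def by (simp add: coprime_iff_gcd_eq_1)
  obtain w z where wz: "w * Fk + z * Ni = 1" using bezout_int[of Fk Ni] gcd1 by auto
  define c0 where "c0 = w * (x0 * Fk + y0 * Fk1)"
  have Mpos: "M > 0"
  proof -
    have "fib (Suc k + 2) > 0" by (intro fib_neq_0_nat) simp
    then show ?thesis using M1 by linarith
  qed
  have Npos: "N > 0"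
  proof -
    have "fib (Suc k + j + 1) > 0" by (intro fib_neq_0_nat) simp
    then show ?thesis unfolding N_def by (simp only: of_nat_0_less_iff)
  qed
  define T where "T = \<eta> * N / (4 * M)"
  have TM: "T * M = \<eta> * N / 4" unfolding T_def using Mpos by simp
  have Tpos: "T > 0" unfolding T_def using eta Npos Mpos by simp
  have e2pos: "\<eta>^2 > 0" using eta by simp
  have nn1: "144/\<eta>^2 \<ge> 0" using e2pos by simp
  have nn2: "144^3 * K^2 / \<eta>^6 \<ge> 0" using eta by simp
  have bigN: "N > 144/\<eta>^2 + 144^3 * K^2 / \<eta>^6" using big unfolding N_def .
  have big1: "\<eta>^2 * N > 144"
  proof -
    have "N > 144 / \<eta>^2" using bigN nn2 by linarith
    then show ?thesis using e2pos by (simp add: pos_divide_less_eq mult.commute)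
  qed
  have hM: "M < \<eta> * N / 4"
  proof -
    have "M^2 < (\<eta> * N / 4)^2"
    proof -
      have "(\<eta> * N / 4)^2 = (\<eta>^2 * N) * N / 16" by (simp add: power2_eq_square)
      also have "\<dots> > 144 * N / 16" using big1 Npos by (intro divide_strict_right_mono mult_strict_right_mono) auto
      finally show ?thesis using M3 unfolding N_def by simp
    qed
    moreover have "\<eta> * N / 4 \<ge> 0" using eta Npos by simp
    ultimately show ?thesis by (rule power_less_imp_less_base)
  qed
  have T2: "T^2 \<ge> \<eta>^2 * N / 144"
  proof -
    have "T^2 = \<eta>^2 * N^2 / (16 * M^2)" unfolding T_def by (simp add: power_divide power_mult_distrib)
    also have "\<dots> \<ge> \<eta>^2 * N^2 / (16 * (9 * N))"
      using M3 Mpos e2pos Npos unfolding N_def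
      by (intro divide_left_mono mult_left_mono) auto
    also have "\<eta>^2 * N^2 / (16 * (9 * N)) = \<eta>^2 * N / 144" using Npos by (simp add: power2_eq_square)
    finally show ?thesis .
  qed
  have T3: "T > 144 * K / \<eta>^2"
  proof -
    have "N > 144^3 * K^2 / \<eta>^6" using bigN nn1 by linarith
    then have "\<eta>^2 * N / 144 > \<eta>^2 * (144^3 * K^2 / \<eta>^6) / 144"
      using e2pos by (intro divide_strict_right_mono mult_strict_left_mono) auto
    also have "\<eta>^2 * (144^3 * K^2 / \<eta>^6) / 144 = (144 * K / \<eta>^2)^2"
    proof -
      have e6: "(\<eta>::real)^6 = (\<eta>^2)^3" by (simp add: power_mult[symmetric])
      have "\<eta>^2 * (144^3 * K^2 / (\<eta>^2)^3) / 144 = (144 * K / \<eta>^2)^2"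
        using e2pos by (simp add: field_simps power2_eq_square power3_eq_cube)
      then show ?thesis unfolding e6 .
    qed
    finally have "(144 * K / \<eta>^2)^2 < T^2" using T2 by linarith
    moreover have "T \<ge> 0" using Tpos by simp
    ultimately show ?thesis by (rule power_less_imp_less_base)
  qed
  have T4: "T^3 > K * N"
  proof -
    have "T^3 = T * T^2" by (simp add: power3_eq_cube power2_eq_square)
    also have "\<dots> > (144 * K / \<eta>^2) * (\<eta>^2 * N / 144)"
    proof (rule mult_less_le_imp_less)
      show "0 < \<eta>^2 * N / 144" using e2pos Npos by simp
      have "K \<ge> 0" using Kb by (smt (verit) zero_le_power)
      then show "0 \<le> 144 * K / \<eta>^2" using e2pos by simp
    qed (use T2 T3 in auto)
    also have "(144 * K / \<eta>^2) * (\<eta>^2 * N / 144) = K * N" using e2pos by simp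
    finally show ?thesis .
  qed
  define S where "S = {p::int. prime p \<and> p dvd Ni}"
  have Nipos: "Ni > 0" using Npos NN by simp
  have c64: "(64::real) ^ card S \<le> K * N"
  proof -
    have "(64::real) ^ card S \<le> 64^64 * N" using count64[OF Nipos] unfolding S_def NN by (simp only: of_int_mult of_int_power of_int_numeral)
    also have "\<dots> \<le> K * N" using Kb Npos by (intro mult_right_mono) auto
    finally show ?thesis .
  qed
  have T5: "T > 4 ^ card S"
  proof -
    have "((4::real) ^ card S)^3 = (4^3) ^ card S" by (metis power_mult mult.commute)
    also have "\<dots> = 64 ^ card S" by simp
    also have "\<dots> < T^3" using c64 T4 by linarith
    finally have "((4::real) ^ card S)^3 < T^3" .
    moreover have "T \<ge> 0" using Tpos by simp
    ultimately show ?thesis by (rule power_less_imp_less_base)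
  qed
  have finS: "finite S"
  proof (rule finite_subset[of _ "{0..Ni}"])
    show "S \<subseteq> {0..Ni}"
    proof
      fix p assume "p \<in> S"
      then have "prime p" "p dvd Ni" by (auto simp: S_def)
      then show "p \<in> {0..Ni}" using Nipos zdvd_imp_le[of p Ni] prime_ge_0_int[of p] by simp
    qed
  qed simp
  define P where "P = (\<Prod>p\<in>S. 1 - 1 / real_of_int p)"
  have Pge: "P \<ge> (1/2) ^ card S"
  proof -
    have "(1/2::real) ^ card S = (\<Prod>p\<in>S. 1/2)" by simp
    also have "\<dots> \<le> P" unfolding P_def
    proof (rule prod_mono)
      fix p assume "p \<in> S"
      then have "p \<ge> 2" unfolding S_def using prime_ge_2_int by auto
      then show "0 \<le> (1/2::real) \<and> 1/2 \<le> 1 - 1 / real_of_int p" by (simp add: field_simps)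
    qed
    finally show ?thesis .
  qed
  define Cset where "Cset = {m::int. real_of_int c0 \<le> m \<and> m < real_of_int c0 + T \<and> (\<forall>p\<in>S. \<not> p dvd (m::int))}"
  have sv: "\<bar>real (card Cset) - T * P\<bar> \<le> 2 ^ card S"
  proof -
    have allS: "\<forall>p\<in>S. prime p" unfolding S_def by auto
    have T0: "0 \<le> T" using Tpos by simp
    show ?thesis unfolding Cset_def P_def by (rule sieve[OF finS allS, rule_format, OF T0])
  qed
  have "T * P \<ge> T * (1/2) ^ card S" using Pge Tpos by simp
  moreover have "T * (1/2) ^ card S > 2 ^ card S"
  proof -
    have "(4::real) ^ card S = 2 ^ card S * 2 ^ card S" by (simp add: power_mult_distrib[symmetric])
    then have "T > 2 ^ card S * 2 ^ card S" using T5 by simp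
    then show ?thesis by (simp add: field_simps power_one_over)
  qed
  ultimately have "real (card Cset) > 0" using sv by linarith
  then have "Cset \<noteq> {}" by auto
  then obtain m :: int where m: "real_of_int c0 \<le> real_of_int m" "real_of_int m < real_of_int c0 + T" "\<forall>p\<in>S. \<not> p dvd m"
    unfolding Cset_def by auto
  have copm: "coprime m Ni" using coprime_from_S[of Ni m] m(3) Nipos unfolding S_def by auto
  define t where "t = m - c0"
  have t0: "t \<ge> 0" "real_of_int t < T" using m unfolding t_def by auto
  define a where "a = (x0 + t) * Fk + y0 * Fk1"
  define B where "B = s * ((x0 + t) * Fj1 - y0 * Fj)"
  have copa: "coprime a Ni"
  proof -
    have "w * a = m + (- t * z) * Ni"
    proof -
      have "w * a = c0 + t * (w * Fk)" unfolding a_def c0_def by (simp add: algebra_simps)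
      also have "\<dots> = c0 + t * (1 - z * Ni)"
      proof -
        have "w * Fk = 1 - z * Ni" using wz by linarith
        then show ?thesis by simp
      qed
      finally show ?thesis unfolding t_def by (simp add: algebra_simps)
    qed
    moreover have "coprime (m + (- t * z) * Ni) Ni" using copm
      by (metis coprime_iff_gcd_eq_1 gcd.commute gcd_add_mult add.commute)
    ultimately have "coprime (w * a) Ni" by simp
    then show ?thesis by simp
  qed
  have fkM: "fk + fk1 \<le> M" using M1 unfolding fk_def fk1_def Fk_def Fk1_def
    by (simp add: numeral_2_eq_2)
  have fjM: "fj + fj1 \<le> M" using M2 unfolding fj_def fj1_def Fj_def Fj1_def
    by (simp add: numeral_2_eq_2)
  have fk0: "fk \<ge> 0" "fk1 \<ge> 0" "fj \<ge> 0" "fj1 \<ge> 0" unfolding fk_def fk1_def fj_def fj1_def Fk_def Fk1_def Fj_def Fj1_def by auto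
  have x0b: "X - 1 < x0" "x0 \<le> X" unfolding x0_def by linarith+
  have y0b: "Y - 1 < y0" "y0 \<le> Y" unfolding y0_def by linarith+
  define ra where "ra = real_of_int a"
  have ra: "ra - \<alpha> * N = (x0 - X) * fk + (y0 - Y) * fk1 + t * fk"
    unfolding ra_def a_def XY1[symmetric] fk_def fk1_def by (simp add: algebra_simps)
  have p1: "(x0 - X) * fk \<ge> - fk" "(x0 - X) * fk \<le> 0"
  proof -
    have "(x0 - X) * fk \<ge> (-1) * fk" by (rule mult_right_mono) (use x0b fk0 in auto)
    then show "(x0 - X) * fk \<ge> - fk" by simp
    show "(x0 - X) * fk \<le> 0" by (rule mult_nonpos_nonneg) (use x0b fk0 in auto)
  qed
  have p2: "(y0 - Y) * fk1 \<ge> - fk1" "(y0 - Y) * fk1 \<le> 0"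
  proof -
    have "(y0 - Y) * fk1 \<ge> (-1) * fk1" by (rule mult_right_mono) (use y0b fk0 in auto)
    then show "(y0 - Y) * fk1 \<ge> - fk1" by simp
    show "(y0 - Y) * fk1 \<le> 0" by (rule mult_nonpos_nonneg) (use y0b fk0 in auto)
  qed
  have p3: "t * fk \<le> t * M" using t0 fk0 fkM by (intro mult_left_mono) auto
  have p4: "t * M < T * M" using t0 Mpos by simp
  have tfk: "t * fk \<ge> 0" using t0 fk0 by simp
  have ra1: "ra > \<alpha> * N - \<eta> * N / 4" using ra p1 p2 fkM hM tfk by linarith
  have ra2: "ra < \<alpha> * N + \<eta> * N / 4" using ra p1 p2 p3 p4 TM by linarith
  define rB where "rB = real_of_int B"
  have rB: "rB - \<beta> * N = sr * ((x0 - X + t) * fj1 - (y0 - Y) * fj)"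
  proof -
    have "\<beta> * N = sr * (X * fj1 - Y * fj)" using XY2 ssr by (metis mult.assoc mult_1)
    then show ?thesis unfolding rB_def B_def sr_def fj_def fj1_def by (simp add: algebra_simps)
  qed
  define D where "D = (x0 - X + t) * fj1 - (y0 - Y) * fj"
  have q1: "(x0 - X) * fj1 \<ge> - fj1" "(x0 - X) * fj1 \<le> 0"
  proof -
    have "(x0 - X) * fj1 \<ge> (-1) * fj1" by (rule mult_right_mono) (use x0b fk0 in auto)
    then show "(x0 - X) * fj1 \<ge> - fj1" by simp
    show "(x0 - X) * fj1 \<le> 0" by (rule mult_nonpos_nonneg) (use x0b fk0 in auto)
  qed
  have q2: "(y0 - Y) * fj \<ge> - fj" "(y0 - Y) * fj \<le> 0"
  proof -
    have "(y0 - Y) * fj \<ge> (-1) * fj" by (rule mult_right_mono) (use y0b fk0 in auto)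
    then show "(y0 - Y) * fj \<ge> - fj" by simp
    show "(y0 - Y) * fj \<le> 0" by (rule mult_nonpos_nonneg) (use y0b fk0 in auto)
  qed
  have q3: "t * fj1 \<le> t * M" using t0 fk0 fjM by (intro mult_left_mono) auto
  have q3': "t * fj1 \<ge> 0" using t0 fk0 by simp
  have Dexp: "D = (x0 - X) * fj1 + t * fj1 - (y0 - Y) * fj" unfolding D_def by (simp add: algebra_simps)
  have Db: "\<bar>D\<bar> < \<eta> * N / 2" using Dexp q1 q2 q3 q3' p4 TM hM fjM fk0 by linarith
  have srabs: "\<bar>sr\<bar> = 1" unfolding sr_def s_def by (simp add: abs_mult power_abs)
  have rBb: "\<bar>rB - \<beta> * N\<bar> < \<eta> * N / 2" using rB Db srabs unfolding D_def by (simp add: abs_mult)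
  have cong: "Ci * a = Ni * ((x0 + t) * Fkm + y0 * Fk) + B"
  proof -
    have "Ci * a = (x0 + t) * (Ci * Fk) + y0 * (Ci * Fk1)" unfolding a_def by (simp add: algebra_simps)
    also have "\<dots> = (x0 + t) * (Ni * Fkm - (-1)^(Suc k) * Fj1) + y0 * (Ni * Fk - (-1)^(Suc k+1) * Fj)"
    proof -
      have e1: "Ci * Fk = Ni * Fkm - (-1)^(Suc k) * Fj1" using id2 by (simp add: eq_diff_eq)
      have e2: "Ci * Fk1 = Ni * Fk - (-1)^(Suc k+1) * Fj" using id1 by (simp add: eq_diff_eq)
      show ?thesis by (simp only: e1 e2)
    qed
    also have "\<dots> = Ni * ((x0 + t) * Fkm + y0 * Fk) + B" unfolding B_def s_def by (simp add: algebra_simps)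
    finally show ?thesis .
  qed
  have Ngt: "\<eta> * N > 0" using eta Npos by simp
  have A1: "ra / N \<in> {u..u+\<eta>}" "ra / N > 0" "ra / N < 1"
  proof -
    have "u * N < ra" "ra < (u + \<eta>) * N" using ra1 ra2 Ngt unfolding \<alpha>_def by (simp_all add: algebra_simps)
    then have "u < ra / N" "ra / N < u + \<eta>" using Npos by (simp_all add: field_simps)
    then show "ra / N \<in> {u..u+\<eta>}" "ra / N > 0" "ra / N < 1" using u by auto
  qed
  have B1: "rB / N \<in> {v..v+\<eta>}" "rB / N \<ge> 0" "rB / N < 1"
  proof -
    have r1: "rB - \<beta> * N < \<eta> * N / 2" "- (rB - \<beta> * N) < \<eta> * N / 2" using rBb by (simp_all only: abs_less_iff)
    have r2: "\<beta> * N = v * N + \<eta> * N / 2" "(v + \<eta>) * N = v * N + \<eta> * N" unfolding \<beta>_def by (simp_all add: algebra_simps)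
    have "v * N < rB" "rB < (v + \<eta>) * N" using r1 r2 by linarith+
    then have "v < rB / N" "rB / N < v + \<eta>" using Npos by (simp_all add: field_simps)
    then show "rB / N \<in> {v..v+\<eta>}" "rB / N \<ge> 0" "rB / N < 1" using v by auto
  qed
  have fr: "frac (real (fib (Suc k + j)) * ra / N) = rB / N"
  proof -
    have "real (fib (Suc k + j)) * ra = N * real_of_int ((x0 + t) * Fkm + y0 * Fk) + rB"
      using arg_cong[OF cong, of real_of_int] unfolding Ci_def ra_def rB_def NN by simp
    then have "real (fib (Suc k + j)) * ra / N = real_of_int ((x0 + t) * Fkm + y0 * Fk) + rB / N"
      using Npos by (simp add: field_simps)
    then have "frac (real (fib (Suc k + j)) * ra / N) = frac (rB / N)"
      by (simp only: frac_add_of_int_left)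
    then show ?thesis using B1 by (simp add: frac_eq)
  qed
  have a1: "1 \<le> a" using A1(2) Npos unfolding ra_def by (simp add: zero_less_divide_iff)
  have a2: "a < Ni" using A1(3) Npos unfolding ra_def NN by (simp add: divide_less_eq)
  show ?thesis
    using A1(1) B1(1) fr a1 a2 copa unfolding ra_def N_def Ni_def by auto
qed

lemma fib_ge_aux: "n \<le> fib (n+1) \<and> Suc n \<le> fib (Suc n + 1)"
proof (induction n)
  case 0 then show ?case by (simp add: numeral_2_eq_2)
next
  case (Suc n)
  have e: "fib (Suc (Suc n) + 1) = fib (Suc n + 1) + fib (n + 1)"
    by (metis Suc_eq_plus1 add_Suc fib.simps(3))
  have "Suc (Suc n) \<le> fib (Suc (Suc n) + 1)"
  proof (cases n)
    case 0 then show ?thesis by (simp add: numeral_3_eq_3 numeral_2_eq_2)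
  next
    case (Suc n') then show ?thesis using Suc.IH e by linarith
  qed
  then show ?case using Suc.IH by simp
qed

lemma fib_ge: "n - 1 \<le> fib n"
proof (cases n)
  case 0 then show ?thesis by simp
next
  case (Suc n') then show ?thesis using fib_ge_aux[of n'] by simp
qed

lemma fib_sq_bound:
  assumes "m \<ge> 1" "2 * m \<le> n"
  shows "real (fib (m+2))^2 \<le> 9 * real (fib n)"
proof -
  obtain m' where m': "m = Suc m'" using assms by (cases m) auto
  have f1: "fib (m+1) \<le> 2 * fib m"
  proof -
    have "fib (m+1) = fib m + fib m'" using m' by simp
    moreover have "fib m' \<le> fib m" using m' by (intro fib_mono) simp
    ultimately show ?thesis by simp
  qed
  have f2: "fib (m+2) \<le> 3 * fib m"
  proof -
    have "fib (m+2) = fib (m+1) + fib m" by (simp add: fib_plus_2)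
    then show ?thesis using f1 by simp
  qed
  have f3: "fib m * fib m \<le> fib (2*m)"
  proof -
    have "fib m * fib m \<le> fib (m+1) * fib m" by (intro mult_le_mono1 fib_mono) simp
    also have "\<dots> \<le> (fib (m - 1) + fib (m + 1)) * fib m" by (intro mult_le_mono1) simp
    also have "\<dots> = fib (2*m)" by (rule fib_rec_even[symmetric])
    finally show ?thesis .
  qed
  have f4: "fib (2*m) \<le> fib n" using assms by (intro fib_mono)
  have "fib (m+2) * fib (m+2) \<le> (3 * fib m) * (3 * fib m)" using f2 by (intro mult_le_mono) auto
  also have "\<dots> = 9 * (fib m * fib m)" by simp
  also have "\<dots> \<le> 9 * fib n" using f3 f4 by simp
  finally have "fib (m+2) * fib (m+2) \<le> 9 * fib n" .
  then have "real (fib (m+2) * fib (m+2)) \<le> real (9 * fib n)" by (simp only: of_nat_le_iff)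
  then show ?thesis by (simp add: power2_eq_square)
qed

theorem lemma1:
  fixes \<eta> u v :: real
  assumes "\<eta> > 0"
    and "{u..u+\<eta>} \<subseteq> {0..1}"
    and "{v..v+\<eta>} \<subseteq> {0..1}"
  shows "\<forall>\<^sub>F n in sequentially. \<exists>a::int.
           real_of_int a / real (fib n) \<in> {u..u+\<eta>} \<and>
           frac (real (fib (n - 1)) * real_of_int a / real (fib n)) \<in> {v..v+\<eta>} \<and>
           1 \<le> a \<and> a < int (fib n) \<and> gcd a (int (fib n)) = 1"
proof -
  have u: "0 \<le> u" "u + \<eta> \<le> 1" using assms(1,2) by auto
  have v: "0 \<le> v" "v + \<eta> \<le> 1" using assms(1,3) by auto
  define K :: real where "K = 64^64"
  define bound where "bound = 144/\<eta>^2 + 144^3 * K^2 / \<eta>^6"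
  obtain B0 :: nat where B0: "bound < real B0" using reals_Archimedean2 by blast
  show ?thesis unfolding eventually_sequentially
  proof (rule exI[of _ "B0 + 10"], intro allI impI)
    fix n assume n: "B0 + 10 \<le> n"
    define m where "m = n div 2"
    have fibn: "real (fib n) > bound"
    proof -
      have "n - 1 \<le> fib n" by (rule fib_ge)
      then have "real B0 \<le> real (fib n)" using n by simp
      then show ?thesis using B0 by simp
    qed
    obtain k j where kj: "n = Suc k + j + 1" "Suc k \<le> m" "j = m"
      and cop: "coprime (int (fib (Suc k))) (int (fib n))"
    proof (cases "even n")
      case True
      then have n2: "n = 2 * m" unfolding m_def by simp
      have m2: "m \<ge> 2" using n n2 by simp
      define k where "k = m - 2"
      have g: "gcd (m - 1) n dvd 2"
      proof -
        have "gcd (m - 1) n dvd 2 * (m - 1)" by simp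
        moreover have "gcd (m - 1) n dvd n" by simp
        ultimately have "gcd (m - 1) n dvd n - 2 * (m - 1)" using dvd_diff_nat by blast
        moreover have "n - 2 * (m - 1) = 2" using n2 m2 by simp
        ultimately show ?thesis by metis
      qed
      have "gcd (m - 1) n \<noteq> 0" using n by simp
      then have "gcd (m - 1) n = 1 \<or> gcd (m - 1) n = 2" using g
        by (metis dvd_imp_le le_Suc_eq le_zero_eq numeral_2_eq_2 zero_less_numeral One_nat_def)
      then have "fib (gcd (m - 1) n) = 1" by (auto simp: numeral_2_eq_2)
      then have "gcd (fib (m - 1)) (fib n) = 1" by (simp add: fib_gcd)
      moreover have "Suc k = m - 1" using m2 unfolding k_def by simp
      ultimately have c: "coprime (int (fib (Suc k))) (int (fib n))"
        by (simp add: coprime_iff_gcd_eq_1)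
      show ?thesis by (rule that[of k m]) (use n2 m2 c in \<open>auto simp: k_def\<close>)
    next
      case False
      then have n2: "n = 2 * m + 1" unfolding m_def by presburger
      have m1: "m \<ge> 1" using n n2 by simp
      define k where "k = m - 1"
      have g: "gcd m n dvd 1"
      proof -
        have "gcd m n dvd 2 * m" by simp
        moreover have "gcd m n dvd n" by simp
        ultimately have "gcd m n dvd n - 2 * m" using dvd_diff_nat by blast
        moreover have "n - 2 * m = 1" using n2 by simp
        ultimately show ?thesis by metis
      qed
      then have "fib (gcd m n) = 1" by simp
      then have "gcd (fib m) (fib n) = 1" by (simp add: fib_gcd)
      then have c: "coprime (int (fib (Suc k))) (int (fib n))"
        using m1 unfolding k_def by (simp add: coprime_iff_gcd_eq_1)
      show ?thesis by (rule that[of k m]) (use n2 m1 c in \<open>auto simp: k_def\<close>)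
    qed
    have m1: "m \<ge> 1" "2 * m \<le> n" using n unfolding m_def by auto
    have M1: "real (fib (Suc k + 2)) \<le> real (fib (m+2))"
    proof -
      have "fib (Suc k + 2) \<le> fib (m+2)" using kj(2) by (intro fib_mono) simp
      then show ?thesis by (simp only: of_nat_le_iff)
    qed
    have M2: "real (fib (j+2)) \<le> real (fib (m+2))" using kj by simp
    have M3: "real (fib (m+2))^2 \<le> 9 * real (fib (Suc k + j + 1))"
      using fib_sq_bound[OF m1] kj(1) by simp
    have Kb: "(64::real)^64 \<le> K" unfolding K_def by simp
    have big: "real (fib (Suc k + j + 1)) > 144/\<eta>^2 + 144^3 * K^2 / \<eta>^6"
      using fibn kj(1) unfolding bound_def by simp
    have cop': "coprime (int (fib (Suc k))) (int (fib (Suc k + j + 1)))" using cop kj(1) by simp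
    obtain a :: int where a: "real_of_int a / real (fib (Suc k+j+1)) \<in> {u..u+\<eta>}"
     "frac (real (fib (Suc k + j)) * real_of_int a / real (fib (Suc k+j+1))) \<in> {v..v+\<eta>}"
     "1 \<le> a" "a < int (fib (Suc k+j+1))" "coprime a (int (fib (Suc k+j+1)))"
      using core[OF assms(1) u v cop' M1 M2 M3 Kb big] by blast
    have nm1: "n - 1 = Suc k + j" using kj(1) by simp
    show "\<exists>a::int.
           real_of_int a / real (fib n) \<in> {u..u+\<eta>} \<and>
           frac (real (fib (n - 1)) * real_of_int a / real (fib n)) \<in> {v..v+\<eta>} \<and>
           1 \<le> a \<and> a < int (fib n) \<and> gcd a (int (fib n)) = 1"
      using a unfolding nm1 kj(1)[symmetric] by (auto simp: coprime_iff_gcd_eq_1)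
  qed
qed

end
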